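(* Let $s\ge 1$ and let $i,j$ be integers with $0\le i\le s$, $s\le j\le 2s$ and $(i,j)\ne(s,s)$. Then $$(-1)^{s+i+j}\binom{2s}{j}\sum_{i'=0}^{s}(-1)^{i'}\binom{j-i'-1}{s}\binom{s}{i-i'}+(-1)^{i+j+1}(2s-i)\binom{2s}{i}\sum_{j'=0}^{s}\sum_{t=0}^{i}\frac{(-1)^{t+j'}}{2s-t}\binom{i}{t}\binom{s-t-1+j'}{j'}\binom{s}{j-j'}=0.$$
   Context: For an integer $b\ge 0$ and any integer $a$, $\binom{a}{b}=a(a-1)\cdots(a-b+1)/b!$, and $\binom{a}{b}=0$ for $b<0$. *)

theory Defs
  imports Complex_Main
begin

definition binom :: "int \<Rightarrow> int \<Rightarrow> real" where
  "binom a b = (if b < 0 then 0 else (real_of_int a) gchoose (nat b))"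

end

theory Submission
  imports Defs "HOL-Computational_Algebra.Formal_Power_Series"
begin



lemma ratkey1: "\<And>X1 X2 X3 X4 X5 X6 :: real. X1 > 0 \<Longrightarrow> X2 > 0 \<Longrightarrow> X3 > 0 \<Longrightarrow> X4 > 0 \<Longrightarrow> X5 > 0 \<Longrightarrow> X6 > 0 \<Longrightarrow> P \<ge> 0 \<Longrightarrow> A \<ge> 0 \<Longrightarrow> B \<ge> 0 \<Longrightarrow>
     ((P+A+B+3) * X1) / (((P+A+2) * X2) * ((B+1) * X3)) * (X2 / (((P+1) * X4) * X5))
     + X1 / (((P+A+2) * X2) * X3) * (X2 / (X4 * ((A+1) * X5)))
     = X1 / (((P+1) * X4) * X6) * (((A+B+2) * X6) / (((A+1) * X5) * ((B+1) * X3)))"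
  by (simp add: divide_simps) (simp add: algebra_simps)

lemma Fstep_generic:
  fixes p a b :: nat
  shows "real ((p+a+b+3) choose (p+a+2)) * real ((p+a+1) choose (p+1))
       + real ((p+a+b+2) choose (p+a+2)) * real ((p+a+1) choose p)
       = real ((p+a+b+2) choose (p+1)) * real ((a+b+2) choose (a+1))"
proof -
  have fS: "Suc (p+a+b+2) = p+a+b+3" "Suc (p+a+1) = p+a+2" "Suc b = b+1" "Suc p = p+1" "Suc a = a+1" "Suc (a+b+1) = a+b+2"
    by simp_all
  have e1: "real ((p+a+b+3) choose (p+a+2)) = fact (p+a+b+3) / (fact (p+a+2) * fact (b+1))"
    by (subst binomial_fact) (auto simp: numeral_eq_Suc)
  have e2: "real ((p+a+1) choose (p+1)) = fact (p+a+1) / (fact (p+1) * fact a)"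
    by (subst binomial_fact) auto
  have e3: "real ((p+a+b+2) choose (p+a+2)) = fact (p+a+b+2) / (fact (p+a+2) * fact b)"
    by (subst binomial_fact) auto
  have e4: "real ((p+a+1) choose p) = fact (p+a+1) / (fact p * fact (a+1))"
    by (subst binomial_fact) auto
  have e5: "real ((p+a+b+2) choose (p+1)) = fact (p+a+b+2) / (fact (p+1) * fact (a+b+1))"
    by (subst binomial_fact) auto
  have e6: "real ((a+b+2) choose (a+1)) = fact (a+b+2) / (fact (a+1) * fact (b+1))"
    by (subst binomial_fact) auto
  have f1: "(fact (p+a+b+3)::real) = real (p+a+b+3) * fact (p+a+b+2)"
    using fact_Suc[of "p+a+b+2"] by (simp only: fS)
  have f2: "(fact (p+a+2)::real) = real (p+a+2) * fact (p+a+1)"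
    using fact_Suc[of "p+a+1"] by (simp only: fS)
  have f3: "(fact (b+1)::real) = real (b+1) * fact b"
    using fact_Suc[of "b"] by (simp only: fS)
  have f4: "(fact (p+1)::real) = real (p+1) * fact p"
    using fact_Suc[of "p"] by (simp only: fS)
  have f5: "(fact (a+1)::real) = real (a+1) * fact a"
    using fact_Suc[of "a"] by (simp only: fS)
  have f6: "(fact (a+b+2)::real) = real (a+b+2) * fact (a+b+1)"
    using fact_Suc[of "a+b+1"] by (simp only: fS)
  show ?thesis
    unfolding e1 e2 e3 e4 e5 e6 f1 f2 f3 f4 f5 f6
    using ratkey1[of "fact(p+a+b+2)" "fact(p+a+1)" "fact b" "fact p" "fact a" "fact(a+b+1)" "real p" "real a" "real b"]
    by (simp only: of_nat_add of_nat_numeral of_nat_1 fact_gt_zero of_nat_0_le_iff simp_thms)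
qed

lemma Fstep:
  fixes p q S :: nat
  assumes "Suc p \<le> q"
  shows "real ((S + Suc p) choose q) * real ((q-1) choose Suc p) + real ((S+p) choose q) * real ((q-1) choose p)
       = real ((S+p) choose Suc p) * real (S choose (q - Suc p))"
proof -
  consider (big) "q > S+p+1" | (eq) "q = S+p+1" | (qp) "q = p+1" | (gen) "q \<le> S+p" "q \<ge> p+2"
    using assms by linarith
  then show ?thesis
  proof cases
    case big
    then have z: "(S + Suc p) choose q = 0" "(S+p) choose q = 0" "S choose (q - Suc p) = 0"
      by (auto intro!: binomial_eq_0)
    show ?thesis unfolding z by simp
  next
    case eq
    then show ?thesis by simp
  next
    case qp
    then show ?thesis by simp
  next
    case gen
    define a where "a = q - p - 2"
    define b where "b = S + p - q"
    have q: "q = p+a+2" and S: "S = a+b+2" using gen by (auto simp: a_def b_def)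
    show ?thesis
      using Fstep_generic[of p a b] unfolding q S
      by (simp add: algebra_simps numeral_eq_Suc)
  qed
qed

lemma ratkey2: "\<And>XF XI XG1 XFa XE XK :: real. XF > 0 \<Longrightarrow> XI > 0 \<Longrightarrow> XG1 > 0 \<Longrightarrow> XFa > 0 \<Longrightarrow> XE > 0 \<Longrightarrow> XK > 0
  \<Longrightarrow> F \<ge> 0 \<Longrightarrow> E \<ge> 0 \<Longrightarrow> I \<ge> 0 \<Longrightarrow>
  (F+E+I+3) * XF / ((I+1)*XI * ((F+E+2)*XG1)) * (XG1 / (XFa * ((E+1)*XE)))
  + XF/(XI * ((F+E+2)*XG1)) * (XG1/(((F+1)*XFa)*XE))
  = ((I+F+2)*XK)/(((I+1)*XI)*((F+1)*XFa)) * (XF/(XK*((E+1)*XE)))"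
  by (simp add: divide_simps) (simp add: algebra_simps)

lemma Tstep_generic:
  fixes f e i :: nat
  shows "real ((f+e+i+3) choose (i+1)) * real ((f+e+1) choose f)
       + real ((f+e+i+2) choose i) * real ((f+e+1) choose (f+1))
       = real ((i+f+2) choose (i+1)) * real ((f+e+i+2) choose (i+f+1))"
proof -
  have fS: "Suc (f+e+i+2) = f+e+i+3" "Suc i = i+1" "Suc e = e+1" "Suc f = f+1" "Suc (i+f+1) = i+f+2" "Suc (f+e+1) = f+e+2"
    by simp_all
  have e1: "real ((f+e+i+3) choose (i+1)) = fact (f+e+i+3) / (fact (i+1) * fact (f+e+2))"
    by (subst binomial_fact) auto
  have e2: "real ((f+e+1) choose f) = fact (f+e+1) / (fact f * fact (e+1))"
    by (subst binomial_fact) auto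
  have e3: "real ((f+e+i+2) choose i) = fact (f+e+i+2) / (fact i * fact (f+e+2))"
    by (subst binomial_fact) auto
  have e4: "real ((f+e+1) choose (f+1)) = fact (f+e+1) / (fact (f+1) * fact e)"
    by (subst binomial_fact) auto
  have e5: "real ((i+f+2) choose (i+1)) = fact (i+f+2) / (fact (i+1) * fact (f+1))"
    by (subst binomial_fact) auto
  have e6: "real ((f+e+i+2) choose (i+f+1)) = fact (f+e+i+2) / (fact (i+f+1) * fact (e+1))"
    by (subst binomial_fact) auto
  have f1: "(fact (f+e+i+3)::real) = real (f+e+i+3) * fact (f+e+i+2)"
    using fact_Suc[of "f+e+i+2"] by (simp only: fS)
  have f2: "(fact (i+1)::real) = real (i+1) * fact i"
    using fact_Suc[of "i"] by (simp only: fS)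
  have f3: "(fact (e+1)::real) = real (e+1) * fact e"
    using fact_Suc[of "e"] by (simp only: fS)
  have f4: "(fact (f+1)::real) = real (f+1) * fact f"
    using fact_Suc[of "f"] by (simp only: fS)
  have f5: "(fact (i+f+2)::real) = real (i+f+2) * fact (i+f+1)"
    using fact_Suc[of "i+f+1"] by (simp only: fS)
  have f6: "(fact (f+e+2)::real) = real (f+e+2) * fact (f+e+1)"
    using fact_Suc[of "f+e+1"] by (simp only: fS)
  show ?thesis
    unfolding e1 e2 e3 e4 e5 e6 f1 f2 f3 f4 f5 f6
    using ratkey2[of "fact(f+e+i+2)" "fact i" "fact(f+e+1)" "fact f" "fact e" "fact(i+f+1)" "real f" "real e" "real i"]
    by (simp only: of_nat_add of_nat_numeral of_nat_1 fact_gt_zero of_nat_0_le_iff simp_thms)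
qed

lemma Tstep:
  fixes c i S :: nat
  assumes "Suc i \<le> S"
  shows "real ((c + 1 + Suc i) choose Suc i) * real (c choose (S - Suc i)) + real ((c+1+i) choose i) * real (c choose (S-i))
       = real ((S+1) choose Suc i) * real ((c + Suc i) choose S)"
proof -
  consider (small) "c+i+1 < S" | (eq) "c+i+1 = S" | (gen) "c+i+1 > S"
    by linarith
  then show ?thesis
  proof cases
    case small
    then have z: "c choose (S - Suc i) = 0" "c choose (S-i) = 0" "(c + Suc i) choose S = 0"
      by (auto intro!: binomial_eq_0)
    show ?thesis unfolding z by simp
  next
    case eq
    then have r: "c + 1 + Suc i = S + 1" "c + Suc i = S" "S - Suc i = c" "S - i = Suc c" by auto
    show ?thesis unfolding r by simp
  next
    case gen
    define f where "f = S - i - 1"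
    define e where "e = c + i - S"
    have S: "S = i+1+f" and c: "c = f+1+e" using gen assms by (auto simp: f_def e_def)
    show ?thesis
      using Tstep_generic[of f e i] unfolding S c
      by (simp add: algebra_simps numeral_eq_Suc)
  qed
qed
lemma lin_aux:
  fixes \<sigma> A B C D E F :: real
  assumes "E*F + A*B = C*D"
  shows "\<sigma>*A*B + (-\<sigma>)*C*D = (-\<sigma>)*E*F"
  using assms by algebra

lemma Fsum:
  fixes S p q :: nat
  assumes "S \<ge> 1" "p \<le> q"
  shows "(\<Sum>k\<le>p. (-1)^k * real ((S-1+k) choose k) * real (S choose (q-k)))
         = (-1)^p * real ((S+p) choose q) * real ((q-1) choose p)"
  using assms(2)
proof (induction p)
  case 0
  then show ?case by simp
next
  case (Suc p)
  then have IH: "(\<Sum>k\<le>p. (-1)^k * real ((S-1+k) choose k) * real (S choose (q-k)))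
         = (-1)^p * real ((S+p) choose q) * real ((q-1) choose p)" by simp
  have st: "real ((S + Suc p) choose q) * real ((q-1) choose Suc p) + real ((S+p) choose q) * real ((q-1) choose p)
       = real ((S+p) choose Suc p) * real (S choose (q - Suc p))"
    using Fstep[of p q S] Suc.prems by blast
  have e: "S - 1 + Suc p = S + p" using assms(1) by simp
  have m: "(-1::real)^Suc p = - ((-1)^p)" by simp
  show ?case
    unfolding sum.atMost_Suc IH e m
    by (rule lin_aux[OF st])
qed

lemma Tsum:
  fixes S i c :: nat
  assumes "i \<le> S"
  shows "(\<Sum>k\<le>i. (-1)^k * real ((S+1) choose k) * real ((c+k) choose S))
         = (-1)^i * real ((c+1+i) choose i) * real (c choose (S-i))"
  using assms
proof (induction i)
  case 0
  then show ?case by simp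
next
  case (Suc i)
  then have IH: "(\<Sum>k\<le>i. (-1)^k * real ((S+1) choose k) * real ((c+k) choose S))
         = (-1)^i * real ((c+1+i) choose i) * real (c choose (S-i))" by simp
  have st: "real ((c + 1 + Suc i) choose Suc i) * real (c choose (S - Suc i)) + real ((c+1+i) choose i) * real (c choose (S-i))
       = real ((S+1) choose Suc i) * real ((c + Suc i) choose S)"
    using Tstep[of i S c] Suc.prems by blast
  have m: "(-1::real)^Suc i = - ((-1)^i)" by simp
  show ?case
    unfolding sum.atMost_Suc IH m
    by (rule lin_aux[OF st])
qed

lemma pascal_split:
  fixes g :: "nat \<Rightarrow> real"
  shows "(\<Sum>u\<le>Suc r. g u * real (Suc r choose u))
       = (\<Sum>u\<le>r. g u * real (r choose u)) + (\<Sum>u\<le>r. g (Suc u) * real (r choose u))"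
proof -
  have "(\<Sum>u\<le>Suc r. g u * real (Suc r choose u))
      = g 0 * real (Suc r choose 0) + (\<Sum>u\<le>r. g (Suc u) * real (Suc r choose Suc u))"
    by (rule sum.atMost_Suc_shift)
  also have "\<dots> = g 0 + (\<Sum>u\<le>r. g (Suc u) * real (r choose u) + g (Suc u) * real (r choose Suc u))"
    by (simp only: binomial_Suc_Suc of_nat_add distrib_left binomial_n_0 of_nat_1 mult_1_right)
  also have "\<dots> = (g 0 * real (r choose 0) + (\<Sum>u\<le>r. g (Suc u) * real (r choose Suc u)))
      + (\<Sum>u\<le>r. g (Suc u) * real (r choose u))"
    by (simp add: sum.distrib)
  also have "g 0 * real (r choose 0) + (\<Sum>u\<le>r. g (Suc u) * real (r choose Suc u))
      = (\<Sum>u\<le>Suc r. g u * real (r choose u))"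
    by (simp only: sum.atMost_Suc_shift)
  also have "\<dots> = (\<Sum>u\<le>r. g u * real (r choose u))"
    by (simp add: sum.atMost_Suc)
  finally show ?thesis .
qed

lemma ratkey3: "\<And>Xr Xg XN1 :: real. Xr > 0 \<Longrightarrow> Xg > 0 \<Longrightarrow> XN1 > 0 \<Longrightarrow> R \<ge> 0 \<Longrightarrow> G \<ge> 0 \<Longrightarrow>
   Xr * ((G+1) * Xg) / ((R+G+2) * XN1) - Xr * Xg / XN1 = - ((R+1) * Xr) * Xg / ((R+G+2) * XN1)"
  by (simp add: divide_simps) (simp add: algebra_simps)

lemma beta_sum:
  "r < N \<Longrightarrow> (\<Sum>u\<le>r. (-1)^u * real (r choose u) / real (N - u))
       = (-1)^r * fact r * fact (N-r-1) / fact N"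
proof (induction r arbitrary: N)
  case 0
  then obtain M where N: "N = Suc M" by (cases N) auto
  have "(fact (Suc M)::real) = real (Suc M) * fact M" by (rule fact_Suc)
  then show ?case unfolding N by (simp del: fact_Suc of_nat_Suc)
next
  case (Suc r)
  define g where "g = N - r - 2"
  have N: "N = r + 2 + g" using Suc.prems unfolding g_def by simp
  have IH1: "(\<Sum>u\<le>r. (-1)^u * real (r choose u) / real (N - u)) = (-1)^r * fact r * fact (N-r-1) / fact N"
    using Suc by simp
  have IH2: "(\<Sum>u\<le>r. (-1)^u * real (r choose u) / real ((N - 1) - u)) = (-1)^r * fact r * fact (N-1-r-1) / fact (N-1)"
    using Suc.IH[of "N-1"] Suc.prems by simp
  have "(\<Sum>u\<le>Suc r. (-1)^u * real (Suc r choose u) / real (N - u))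
      = (\<Sum>u\<le>Suc r. ((-1)^u / real (N - u)) * real (Suc r choose u))"
    by (simp add: algebra_simps)
  also have "\<dots> = (\<Sum>u\<le>r. ((-1)^u / real (N - u)) * real (r choose u))
        + (\<Sum>u\<le>r. ((-1)^(Suc u) / real (N - Suc u)) * real (r choose u))"
    by (rule pascal_split)
  also have "(\<Sum>u\<le>r. ((-1)^(Suc u) / real (N - Suc u)) * real (r choose u))
      = - (\<Sum>u\<le>r. (-1)^u * real (r choose u) / real ((N - 1) - u))"
    by (simp add: sum_negf[symmetric] algebra_simps)
  also have "(\<Sum>u\<le>r. ((-1)^u / real (N - u)) * real (r choose u))
      = (\<Sum>u\<le>r. (-1)^u * real (r choose u) / real (N - u))"
    by (simp add: algebra_simps)
  finally have eq: "(\<Sum>u\<le>Suc r. (-1)^u * real (Suc r choose u) / real (N - u))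
     = (-1)^r * fact r * fact (N-r-1) / fact N - (-1)^r * fact r * fact (N-1-r-1) / fact (N-1)"
    unfolding IH1 IH2 by simp
  have a1: "N - r - 1 = Suc g" "N - 1 - r - 1 = g" "N - Suc r - 1 = g" "N - 1 = r + g + 1" using N by auto
  have a2: "(fact (Suc g)::real) = real (g+1) * fact g" by simp
  have a3: "(fact N::real) = real (r+g+2) * fact (r+g+1)"
    unfolding N using fact_Suc[of "r+g+1"] by (simp add: algebra_simps)
  have a4: "(fact (Suc r)::real) = real (r+1) * fact r" by simp
  have "(-1)^r * fact r * fact (N-r-1) / fact N - (-1)^r * fact r * fact (N-1-r-1) / fact (N-1)
       = (-1::real)^r * (fact r * (real (g+1) * fact g) / (real (r+g+2) * fact (r+g+1)) - fact r * fact g / fact (r+g+1))"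
    unfolding a1 a2 a3 by (simp add: algebra_simps)
  also have "\<dots> = (-1::real)^r * (- (real (r+1) * fact r) * fact g / (real (r+g+2) * fact (r+g+1)))"
    using ratkey3[of "fact r" "fact g" "fact (r+g+1)" "real r" "real g"]
    by (simp only: of_nat_add of_nat_numeral of_nat_1 fact_gt_zero of_nat_0_le_iff simp_thms)
  also have "\<dots> = (-1)^Suc r * fact (Suc r) * fact (N - Suc r - 1) / fact N"
    unfolding a1 a3 a4 by simp
  finally show ?case using eq by simp
qed

lemma ratkey4: "\<And>fN fI fb fm fa fab :: real. fN > 0 \<Longrightarrow> fI > 0 \<Longrightarrow> fb > 0 \<Longrightarrow> fm > 0 \<Longrightarrow> fa > 0 \<Longrightarrow> fab > 0 \<Longrightarrow> B \<ge> 0 \<Longrightarrow>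
  (B+1) * (fN / (fI * ((B+1) * fb))) * (\<sigma> * (fI / (fm * fa)) * (\<tau> * fa * fb / fab)) = (\<sigma> * \<tau>) * (fN / (fm * fab))"
  by (simp add: divide_simps)

lemma beta2:
  assumes "m \<le> I" "I < n"
  shows "real (n - I) * real (n choose I) * (\<Sum>t\<le>I. (-1)^t * real (I choose t) * real (t choose m) / real (n - t))
       = (-1)^I * real (n choose m)"
proof -
  define h where "h t = (-1)^t * real (I choose t) * real (t choose m) / real (n - t)" for t
  have "{..I} = {..<m} \<union> {m..I}" using assms by auto
  then have "(\<Sum>t\<le>I. h t) = (\<Sum>t<m. h t) + (\<Sum>t=m..I. h t)"
    by (simp add: sum.union_disjoint ivl_disj_int)
  also have "(\<Sum>t<m. h t) = 0"
    by (rule sum.neutral) (auto simp: h_def binomial_eq_0)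
  also have "(\<Sum>t=m..I. h t) = (\<Sum>t=0+m..(I-m)+m. h t)" using assms by simp
  also have "\<dots> = (\<Sum>u=0..I-m. h (u+m))" by (rule sum.shift_bounds_cl_nat_ivl)
  also have "\<dots> = (\<Sum>u\<le>I-m. (-1)^m * real (I choose m) * ((-1)^u * real ((I-m) choose u) / real ((n-m) - u)))"
  proof (rule sum.cong)
    fix u assume u: "u \<in> {..I-m}"
    have cm: "(I choose (u+m)) * ((u+m) choose m) = (I choose m) * ((I-m) choose u)"
      using choose_mult[of m "u+m" I] u assms by auto
    have "h (u+m) = (-1)^(u+m) * real ((I choose (u+m)) * ((u+m) choose m)) / real (n - (u+m))"
      by (simp add: h_def)
    also have "\<dots> = (-1)^m * real (I choose m) * ((-1)^u * real ((I-m) choose u) / real ((n-m) - u))"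
      unfolding cm by (simp add: power_add algebra_simps)
    finally show "h (u+m) = (-1)^m * real (I choose m) * ((-1)^u * real ((I-m) choose u) / real ((n-m) - u))" .
  qed (simp add: atLeast0AtMost)
  also have "\<dots> = (-1)^m * real (I choose m) * (\<Sum>u\<le>I-m. (-1)^u * real ((I-m) choose u) / real ((n-m) - u))"
    by (simp add: sum_distrib_left)
  also have "(\<Sum>u\<le>I-m. (-1)^u * real ((I-m) choose u) / real ((n-m) - u))
     = (-1)^(I-m) * fact (I-m) * fact ((n-m)-(I-m)-1) / fact (n-m)"
    by (rule beta_sum) (use assms in auto)
  finally have S: "(\<Sum>t\<le>I. h t) = (-1)^m * real (I choose m) * ((-1)^(I-m) * fact (I-m) * fact ((n-m)-(I-m)-1) / fact (n-m))" by simp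
  define a where "a = I - m"
  define b where "b = n - I - 1"
  have I: "I = m + a" and n: "n = m + a + b + 1" using assms by (auto simp: a_def b_def)
  have e1: "real (n - I) = real b + 1" using I n by simp
  have e2: "real (n choose I) = fact n / (fact I * ((real b + 1) * fact b))"
  proof -
    have "real (n choose I) = fact n / (fact I * fact (n - I))" by (rule binomial_fact) (use assms in auto)
    moreover have "n - I = Suc b" using I n by simp
    ultimately show ?thesis by simp
  qed
  have e3: "real (I choose m) = fact I / (fact m * fact a)"
    using binomial_fact[of m I] assms unfolding a_def by simp
  have e4: "real (n choose m) = fact n / (fact m * fact (a+b+1))"
  proof -
    have "real (n choose m) = fact n / (fact m * fact (n - m))" by (rule binomial_fact) (use assms in auto)
    moreover have "n - m = a+b+1" using I n by simp
    ultimately show ?thesis by simp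
  qed
  have e5: "(n-m)-(I-m)-1 = b" "n - m = a+b+1" "I - m = a" using I n by auto
  have "real (n - I) * real (n choose I) * (\<Sum>t\<le>I. h t)
     = (real b + 1) * (fact n / (fact I * ((real b + 1) * fact b))) * ((-1)^m * (fact I / (fact m * fact a)) * ((-1)^a * fact a * fact b / fact (a+b+1)))"
    unfolding S e1 e2 e3 e5 by simp
  also have "\<dots> = ((-1)^m * (-1)^a) * (fact n / (fact m * fact (a+b+1)))"
    by (rule ratkey4) auto
  also have "\<dots> = (-1)^I * real (n choose m)"
    unfolding e4 I by (simp add: power_add)
  finally show ?thesis unfolding h_def .
qed

lemma neg1_par:
  assumes "a + 2*k = b"
  shows "(-1::real)^a = (-1)^b"
proof -
  have "(-1::real)^b = (-1)^a * ((-1)^2)^k" unfolding assms[symmetric] by (simp add: power_add power_mult)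
  then show ?thesis by simp
qed

lemma tri_swap:
  fixes f :: "nat \<Rightarrow> nat \<Rightarrow> real"
  shows "(\<Sum>a\<le>n. \<Sum>b\<le>a. f a b) = (\<Sum>b\<le>n. \<Sum>a=b..n. f a b)"
proof -
  have "(\<Sum>a\<le>n. \<Sum>b\<le>a. f a b) = (\<Sum>a\<le>n. \<Sum>b\<le>n. if b \<le> a then f a b else 0)"
  proof (rule sum.cong[OF refl])
    fix a assume a: "a \<in> {..n}"
    have "(\<Sum>b\<le>n. if b \<le> a then f a b else 0) = sum (f a) ({..n} \<inter> {..a})"
      using sum.inter_restrict[of "{..n}" "f a" "{..a}"] by simp
    also have "{..n} \<inter> {..a} = {..a}" using a by auto
    finally show "(\<Sum>b\<le>a. f a b) = (\<Sum>b\<le>n. if b \<le> a then f a b else 0)" by simp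
  qed
  also have "\<dots> = (\<Sum>b\<le>n. \<Sum>a\<le>n. if b \<le> a then f a b else 0)"
    by (rule sum.swap)
  also have "\<dots> = (\<Sum>b\<le>n. \<Sum>a=b..n. f a b)"
  proof (rule sum.cong[OF refl])
    fix b assume b: "b \<in> {..n}"
    have "(\<Sum>a\<le>n. if b \<le> a then f a b else 0) = sum (\<lambda>a. f a b) ({..n} \<inter> {b..})"
      using sum.inter_restrict[of "{..n}" "\<lambda>a. f a b" "{b..}"] by simp
    also have "{..n} \<inter> {b..} = {b..n}" by auto
    finally show "(\<Sum>a\<le>n. if b \<le> a then f a b else 0) = (\<Sum>a=b..n. f a b)" by simp
  qed
  finally show ?thesis .
qed

lemma shift_ivl:
  fixes g :: "nat \<Rightarrow> real"
  assumes "m \<le> n"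
  shows "(\<Sum>a=m..n. g a) = (\<Sum>k\<le>n-m. g (k+m))"
proof -
  have "(\<Sum>a=m..n. g a) = (\<Sum>a=0+m..(n-m)+m. g a)" using assms by simp
  also have "\<dots> = (\<Sum>k=0..n-m. g (k+m))" by (rule sum.shift_bounds_cl_nat_ivl)
  finally show ?thesis by (simp add: atLeast0AtMost)
qed

lemma alt_row: "real (S choose v) = (\<Sum>u\<le>v. (-1)^(v+u) * real ((S+1) choose u))"
proof -
  have h: "(\<Sum>u\<le>v. real ((S+1) choose u) * (-1)^u) = (-1)^v * real (S choose v)"
    using gbinomial_sum_lower_neg[of "real (S+1)" v] by (simp add: binomial_gbinomial)
  have "(\<Sum>u\<le>v. (-1)^(v+u) * real ((S+1) choose u)) = (-1)^v * (\<Sum>u\<le>v. real ((S+1) choose u) * (-1)^u)"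
    by (simp add: sum_distrib_left power_add algebra_simps)
  also have "\<dots> = real (S choose v)" unfolding h by (simp flip: power_add)
  finally show ?thesis by simp
qed

lemma sumA_nat:
  fixes I J S :: nat
  assumes IS: "I \<le> S" and IJ: "I < J"
  shows "(\<Sum>k\<le>I. (-1)^k * real ((J-1-k) choose S) * real (S choose (I-k)))
       = (\<Sum>m\<le>I. (-1)^(I+m) * real (J choose m) * real ((J-1-m) choose (S-m)))"
proof -
  have "(\<Sum>k\<le>I. (-1)^k * real ((J-1-k) choose S) * real (S choose (I-k)))
      = (\<Sum>k\<le>I. \<Sum>m=k..I. (-1)^k * real ((J-1-k) choose S) * ((-1)^(I+m) * real ((S+1) choose (m-k))))"
  proof (rule sum.cong[OF refl])
    fix k assume k: "k \<in> {..I}"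
    have "real (S choose (I-k)) = (\<Sum>u\<le>I-k. (-1)^(I-k+u) * real ((S+1) choose u))" by (rule alt_row)
    also have "\<dots> = (\<Sum>m=k..I. (-1)^(I-k+(m-k)) * real ((S+1) choose (m-k)))"
      using shift_ivl[of k I "\<lambda>m. (-1)^(I-k+(m-k)) * real ((S+1) choose (m-k))"] k by simp
    also have "\<dots> = (\<Sum>m=k..I. (-1)^(I+m) * real ((S+1) choose (m-k)))"
    proof (rule sum.cong[OF refl])
      fix m assume "m \<in> {k..I}"
      then have "(-1::real)^(I-k+(m-k)) = (-1)^(I+m)" by (intro neg1_par[of _ k]) auto
      then show "(-1)^(I-k+(m-k)) * real ((S+1) choose (m-k)) = (-1)^(I+m) * real ((S+1) choose (m-k))" by simp
    qed
    finally show "(-1)^k * real ((J-1-k) choose S) * real (S choose (I-k))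
      = (\<Sum>m=k..I. (-1)^k * real ((J-1-k) choose S) * ((-1)^(I+m) * real ((S+1) choose (m-k))))"
      by (simp add: sum_distrib_left)
  qed
  also have "\<dots> = (\<Sum>m\<le>I. \<Sum>k\<le>m. (-1)^k * real ((J-1-k) choose S) * ((-1)^(I+m) * real ((S+1) choose (m-k))))"
    by (rule tri_swap[of "\<lambda>m k. (-1)^k * real ((J-1-k) choose S) * ((-1)^(I+m) * real ((S+1) choose (m-k)))", symmetric])
  also have "\<dots> = (\<Sum>m\<le>I. (-1)^(I+m) * real (J choose m) * real ((J-1-m) choose (S-m)))"
  proof (rule sum.cong[OF refl])
    fix m assume m: "m \<in> {..I}"
    then have mI: "m \<le> I" by simp
    have "(\<Sum>k\<le>m. (-1)^k * real ((J-1-k) choose S) * ((-1)^(I+m) * real ((S+1) choose (m-k))))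
        = (-1)^(I+m) * (\<Sum>k\<le>m. (-1)^k * real ((S+1) choose (m-k)) * real ((J-1-k) choose S))"
      by (simp add: sum_distrib_left algebra_simps)
    also have "(\<Sum>k\<le>m. (-1)^k * real ((S+1) choose (m-k)) * real ((J-1-k) choose S))
        = (\<Sum>k\<le>m. (-1)^m * ((-1)^k * real ((S+1) choose k) * real ((J-1-m+k) choose S)))"
    proof -
      have "(\<Sum>k\<le>m. (-1)^m * ((-1)^k * real ((S+1) choose k) * real ((J-1-m+k) choose S)))
          = (\<Sum>k=0..m. (-1)^m * ((-1)^k * real ((S+1) choose k) * real ((J-1-m+k) choose S)))"
        by (simp add: atLeast0AtMost)
      also have "\<dots> = (\<Sum>k=0..m. (-1)^m * ((-1)^(m+0-k) * real ((S+1) choose (m+0-k)) * real ((J-1-m+(m+0-k)) choose S)))"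
        by (rule sum.atLeastAtMost_rev)
      also have "\<dots> = (\<Sum>k=0..m. (-1)^k * real ((S+1) choose (m-k)) * real ((J-1-k) choose S))"
      proof (rule sum.cong[OF refl])
        fix k assume k: "k \<in> {0..m}"
        have p: "(-1::real)^m * (-1)^(m-k) = (-1)^k"
        proof -
          have "(-1::real)^k = (-1)^(m + (m-k))" by (rule neg1_par[of _ "m-k"]) (use k in auto)
          then show ?thesis by (simp add: power_add)
        qed
        have j: "J-1-m+(m-k) = J-1-k" using k mI IJ by auto
        show "(-1)^m * ((-1)^(m+0-k) * real ((S+1) choose (m+0-k)) * real ((J-1-m+(m+0-k)) choose S))
            = (-1)^k * real ((S+1) choose (m-k)) * real ((J-1-k) choose S)"
          unfolding add_0_right j by (simp add: p mult.assoc[symmetric])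
      qed
      finally show ?thesis by (simp add: atLeast0AtMost)
    qed
    also have "\<dots> = (-1)^m * (\<Sum>k\<le>m. (-1)^k * real ((S+1) choose k) * real ((J-1-m+k) choose S))"
      by (simp add: sum_distrib_left)
    also have "(\<Sum>k\<le>m. (-1)^k * real ((S+1) choose k) * real ((J-1-m+k) choose S))
        = (-1)^m * real ((J-1-m+1+m) choose m) * real ((J-1-m) choose (S-m))"
      using Tsum[of m S "J-1-m"] mI IS by simp
    also have "J-1-m+1+m = J" using mI IJ by simp
    finally show "(\<Sum>k\<le>m. (-1)^k * real ((J-1-k) choose S) * ((-1)^(I+m) * real ((S+1) choose (m-k))))
        = (-1)^(I+m) * real (J choose m) * real ((J-1-m) choose (S-m))"
      by (simp add: algebra_simps flip: power_add)
  qed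
  finally show ?thesis .
qed


lemma restrict_le:
  fixes f :: "nat \<Rightarrow> real"
  assumes "I \<le> S"
  shows "(\<Sum>m\<le>S. if m \<le> I then f m else 0) = (\<Sum>m\<le>I. f m)"
proof -
  have "(\<Sum>m\<le>S. if m \<le> I then f m else 0) = sum f ({..S} \<inter> {..I})"
    using sum.inter_restrict[of "{..S}" f "{..I}"] by simp
  also have "{..S} \<inter> {..I} = {..I}" using assms by auto
  finally show ?thesis .
qed

lemma negS_gchoose:
  assumes "S \<ge> 1"
  shows "((- real S) gchoose k) = (-1)^k * real ((S-1+k) choose k)"
proof -
  have "((- real S) gchoose k) = (-1)^k * ((real S + real k - 1) gchoose k)" by (rule gbinomial_minus)
  also have "real S + real k - 1 = real (S-1+k)" using assms by simp
  finally show ?thesis by (simp add: binomial_gbinomial)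
qed

lemma sumB_nat:
  fixes I J S :: nat
  assumes S1: "S \<ge> 1" and IS: "I \<le> S" and SJ: "S \<le> J" and J2: "J \<le> 2*S" and IJ: "I < J"
  shows "real (2*S - I) * real ((2*S) choose I) *
     (\<Sum>j'\<le>S. \<Sum>t\<le>I. (-1)^t / real (2*S - t) * real (I choose t) * ((real t - real S) gchoose j') * real (S choose (J - j')))
   = (-1)^S * real ((2*S) choose J) * (\<Sum>m\<le>I. (-1)^(I+m) * real (J choose m) * real ((J-1-m) choose (S-m)))"
proof -
  define G where "G k = (-1)^k * real ((S-1+k) choose k)" for k
  define \<beta> where "\<beta> m = (\<Sum>t\<le>I. (-1)^t * real (I choose t) * real (t choose m) / real (2*S - t))" for m
  define Q where "Q = real (2*S - I) * real ((2*S) choose I)"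
  define K where "K m = (if m \<le> I then (-1)^I * real ((2*S) choose m) else 0)" for m
  have V: "((real t - real S) gchoose j') = (\<Sum>m\<le>j'. real (t choose m) * G (j'-m))" for t j'
  proof -
    have "((real t - real S) gchoose j') = ((real t + (- real S)) gchoose j')" by simp
    also have "\<dots> = (\<Sum>m=0..j'. (real t gchoose m) * ((- real S) gchoose (j' - m)))"
      by (rule gbinomial_Vandermonde[symmetric])
    also have "\<dots> = (\<Sum>m\<le>j'. real (t choose m) * G (j'-m))"
      by (simp add: atLeast0AtMost binomial_gbinomial negS_gchoose[OF S1] G_def)
    finally show ?thesis .
  qed
  have step1: "(\<Sum>t\<le>I. (-1)^t / real (2*S - t) * real (I choose t) * ((real t - real S) gchoose j') * real (S choose (J - j')))
      = (\<Sum>m\<le>j'. G (j'-m) * real (S choose (J - j')) * \<beta> m)" for j'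
  proof -
    have "(\<Sum>t\<le>I. (-1)^t / real (2*S - t) * real (I choose t) * ((real t - real S) gchoose j') * real (S choose (J - j')))
        = (\<Sum>t\<le>I. \<Sum>m\<le>j'. G (j'-m) * real (S choose (J - j')) * ((-1)^t * real (I choose t) * real (t choose m) / real (2*S - t)))"
      unfolding V by (simp add: sum_distrib_left sum_distrib_right sum_divide_distrib mult_ac)
    also have "\<dots> = (\<Sum>m\<le>j'. \<Sum>t\<le>I. G (j'-m) * real (S choose (J - j')) * ((-1)^t * real (I choose t) * real (t choose m) / real (2*S - t)))"
      by (rule sum.swap)
    also have "\<dots> = (\<Sum>m\<le>j'. G (j'-m) * real (S choose (J - j')) * \<beta> m)"
      by (simp add: \<beta>_def sum_distrib_left)
    finally show ?thesis .
  qed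
  have step2: "Q * \<beta> m = K m" for m
  proof (cases "m \<le> I")
    case True
    have "I < 2*S" using IS S1 by simp
    then show ?thesis using beta2[of m I "2*S"] True unfolding Q_def \<beta>_def K_def by simp
  next
    case False
    then have "\<beta> m = 0" unfolding \<beta>_def by (intro sum.neutral) (auto simp: binomial_eq_0)
    then show ?thesis using False unfolding K_def by simp
  qed
  have step5: "(\<Sum>j'=m..S. G (j'-m) * real (S choose (J - j')))
      = (-1)^(S-m) * real ((2*S-m) choose (J-m)) * real ((J-1-m) choose (S-m))" if mS: "m \<le> S" for m
  proof -
    have "(\<Sum>j'=m..S. G (j'-m) * real (S choose (J - j'))) = (\<Sum>k\<le>S-m. G (k+m-m) * real (S choose (J - (k+m))))"
      by (rule shift_ivl[OF mS])
    also have "\<dots> = (\<Sum>k\<le>S-m. (-1)^k * real ((S-1+k) choose k) * real (S choose ((J-m) - k)))"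
      by (rule sum.cong) (auto simp: G_def add.commute)
    also have "\<dots> = (-1)^(S-m) * real ((S+(S-m)) choose (J-m)) * real ((J-m-1) choose (S-m))"
      by (rule Fsum) (use S1 SJ in auto)
    also have "S+(S-m) = 2*S-m" "J-m-1 = J-1-m" using mS by auto
    ultimately show ?thesis by simp
  qed
  have "Q * (\<Sum>j'\<le>S. \<Sum>t\<le>I. (-1)^t / real (2*S - t) * real (I choose t) * ((real t - real S) gchoose j') * real (S choose (J - j')))
      = (\<Sum>j'\<le>S. \<Sum>m\<le>j'. G (j'-m) * real (S choose (J - j')) * (Q * \<beta> m))"
    unfolding step1 by (simp add: sum_distrib_left mult_ac)
  also have "\<dots> = (\<Sum>j'\<le>S. \<Sum>m\<le>j'. G (j'-m) * real (S choose (J - j')) * K m)"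
    unfolding step2 ..
  also have "\<dots> = (\<Sum>m\<le>S. \<Sum>j'=m..S. G (j'-m) * real (S choose (J - j')) * K m)"
    by (rule tri_swap)
  also have "\<dots> = (\<Sum>m\<le>S. K m * (\<Sum>j'=m..S. G (j'-m) * real (S choose (J - j'))))"
    by (simp add: sum_distrib_left mult_ac)
  also have "\<dots> = (\<Sum>m\<le>S. if m \<le> I then (-1)^I * real ((2*S) choose m) * ((-1)^(S-m) * real ((2*S-m) choose (J-m)) * real ((J-1-m) choose (S-m))) else 0)"
    by (rule sum.cong) (auto simp: K_def step5)
  also have "\<dots> = (\<Sum>m\<le>I. (-1)^I * real ((2*S) choose m) * ((-1)^(S-m) * real ((2*S-m) choose (J-m)) * real ((J-1-m) choose (S-m))))"
    by (rule restrict_le[OF IS])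
  also have "\<dots> = (\<Sum>m\<le>I. (-1)^S * real ((2*S) choose J) * ((-1)^(I+m) * real (J choose m) * real ((J-1-m) choose (S-m))))"
  proof (rule sum.cong[OF refl])
    fix m assume m: "m \<in> {..I}"
    have cm: "real ((2*S) choose J) * real (J choose m) = real ((2*S) choose m) * real ((2*S-m) choose (J-m))"
      using choose_mult[of m J "2*S"] m IS SJ J2 by (simp flip: of_nat_mult)
    have sg: "(-1::real)^(I + (S-m)) = (-1)^(S+(I+m))" by (rule neg1_par[of _ m]) (use m IS in auto)
    show "(-1)^I * real ((2*S) choose m) * ((-1)^(S-m) * real ((2*S-m) choose (J-m)) * real ((J-1-m) choose (S-m)))
        = (-1)^S * real ((2*S) choose J) * ((-1)^(I+m) * real (J choose m) * real ((J-1-m) choose (S-m)))"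
    proof -
      have "(-1)^S * real ((2*S) choose J) * ((-1)^(I+m) * real (J choose m) * real ((J-1-m) choose (S-m)))
          = (-1)^(S+(I+m)) * (real ((2*S) choose J) * real (J choose m)) * real ((J-1-m) choose (S-m))"
        by (simp add: power_add mult_ac)
      also have "\<dots> = (-1)^(I + (S-m)) * (real ((2*S) choose m) * real ((2*S-m) choose (J-m))) * real ((J-1-m) choose (S-m))"
        unfolding cm sg ..
      also have "\<dots> = (-1)^I * real ((2*S) choose m) * ((-1)^(S-m) * real ((2*S-m) choose (J-m)) * real ((J-1-m) choose (S-m)))"
        by (simp add: power_add mult_ac)
      finally show ?thesis by (rule sym)
    qed
  qed
  also have "\<dots> = (-1)^S * real ((2*S) choose J) * (\<Sum>m\<le>I. (-1)^(I+m) * real (J choose m) * real ((J-1-m) choose (S-m)))"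
    by (simp add: sum_distrib_left)
  finally show ?thesis unfolding Q_def by simp
qed

lemma binom_nat: "binom (int n) (int k) = real (n choose k)"
  unfolding binom_def by (simp add: binomial_gbinomial)

lemma binom_neg: "b < 0 \<Longrightarrow> binom a b = 0"
  unfolding binom_def by simp

lemma sum_int_nat:
  fixes f :: "int \<Rightarrow> real"
  shows "(\<Sum>x=0..int n. f x) = (\<Sum>k\<le>n. f (int k))"
proof -
  have "{0..int n} = int ` {0..n}" by (simp add: image_int_atLeastAtMost)
  then have "(\<Sum>x=0..int n. f x) = sum f (int ` {0..n})" by simp
  also have "\<dots> = (\<Sum>k=0..n. f (int k))"
    using sum.reindex[of int "{0..n}" f] by (simp add: inj_on_def comp_def)
  finally show ?thesis by (simp add: atLeast0AtMost)
qed

theorem proposition8: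
  fixes s i j :: int
  assumes "s \<ge> 1" and "0 \<le> i" and "i \<le> s" and "s \<le> j" and "j \<le> 2 * s"
    and "(i, j) \<noteq> (s, s)"
  shows "(-1) ^ nat (s + i + j) * binom (2 * s) j *
           (\<Sum>i' = 0..s. (-1) ^ nat i' * binom (j - i' - 1) s * binom s (i - i'))
         + (-1) ^ nat (i + j + 1) * real_of_int (2 * s - i) * binom (2 * s) i *
           (\<Sum>j' = 0..s. \<Sum>t = 0..i. (-1) ^ nat (t + j') / real_of_int (2 * s - t)
              * binom i t * binom (s - t - 1 + j') j' * binom s (j - j'))
         = 0"
proof -
  define S where "S = nat s"
  define I where "I = nat i"
  define J where "J = nat j"
  have s: "s = int S" and i: "i = int I" and j: "j = int J"
    using assms by (auto simp: S_def I_def J_def)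
  have S1: "S \<ge> 1" and IS: "I \<le> S" and SJ: "S \<le> J" and J2: "J \<le> 2*S"
    using assms unfolding s i j by auto
  have IJ: "I < J"
  proof (rule ccontr)
    assume "\<not> I < J"
    then have "I = S" "J = S" using IS SJ by auto
    then show False using assms(6) unfolding s i j by simp
  qed
  define X where "X = (\<Sum>m\<le>I. (-1)^(I+m) * real (J choose m) * real ((J-1-m) choose (S-m)))"
  have A: "(\<Sum>i' = 0..s. (-1) ^ nat i' * binom (j - i' - 1) s * binom s (i - i')) = X"
  proof -
    have "(\<Sum>i' = 0..s. (-1) ^ nat i' * binom (j - i' - 1) s * binom s (i - i'))
        = (\<Sum>k\<le>S. (-1) ^ nat (int k) * binom (j - int k - 1) s * binom s (i - int k))"
      unfolding s by (rule sum_int_nat)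
    also have "\<dots> = (\<Sum>k\<le>S. if k \<le> I then (-1)^k * real ((J-1-k) choose S) * real (S choose (I-k)) else 0)"
    proof (rule sum.cong[OF refl])
      fix k assume k: "k \<in> {..S}"
      show "(-1) ^ nat (int k) * binom (j - int k - 1) s * binom s (i - int k)
          = (if k \<le> I then (-1)^k * real ((J-1-k) choose S) * real (S choose (I-k)) else 0)"
      proof (cases "k \<le> I")
        case True
        have e1: "j - int k - 1 = int (J-1-k)" using True IJ unfolding j by simp
        have e2: "i - int k = int (I-k)" using True unfolding i by simp
        have e2': "int I - int k = int (I-k)" using True by simp
        have b1: "binom (int (J-1-k)) (int S) = real ((J-1-k) choose S)" by (rule binom_nat)
        have b2: "binom (int S) (int (I-k)) = real (S choose (I-k))" by (rule binom_nat)
        show ?thesis using True unfolding e1 e2 s b1 b2 by simp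
      next
        case False
        then have "i - int k < 0" unfolding i by simp
        then show ?thesis using False by (simp add: binom_neg)
      qed
    qed
    also have "\<dots> = (\<Sum>k\<le>I. (-1)^k * real ((J-1-k) choose S) * real (S choose (I-k)))"
      by (rule restrict_le[OF IS])
    also have "\<dots> = X" unfolding X_def by (rule sumA_nat[OF IS IJ])
    finally show ?thesis .
  qed
  have B: "real_of_int (2 * s - i) * binom (2 * s) i *
           (\<Sum>j' = 0..s. \<Sum>t = 0..i. (-1) ^ nat (t + j') / real_of_int (2 * s - t)
              * binom i t * binom (s - t - 1 + j') j' * binom s (j - j'))
         = (-1)^S * real ((2*S) choose J) * X"
  proof -
    have "(\<Sum>j' = 0..s. \<Sum>t = 0..i. (-1) ^ nat (t + j') / real_of_int (2 * s - t)
              * binom i t * binom (s - t - 1 + j') j' * binom s (j - j'))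
        = (\<Sum>j'\<le>S. \<Sum>t\<le>I. (-1) ^ nat (int t + int j') / real_of_int (2 * s - int t)
              * binom i (int t) * binom (s - int t - 1 + int j') (int j') * binom s (j - int j'))"
      unfolding s i by (simp only: sum_int_nat)
    also have "\<dots> = (\<Sum>j'\<le>S. \<Sum>t\<le>I. (-1)^t / real (2*S - t) * real (I choose t) * ((real t - real S) gchoose j') * real (S choose (J - j')))"
    proof (intro sum.cong refl)
      fix j' t assume j': "j' \<in> {..S}" and t: "t \<in> {..I}"
      have e1: "nat (int t + int j') = t + j'" by simp
      have e2: "real_of_int (2 * s - int t) = real (2*S - t)" using t IS unfolding s by simp
      have e3: "binom i (int t) = real (I choose t)" unfolding i by (rule binom_nat)
      have e4: "binom s (j - int j') = real (S choose (J - j'))"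
      proof -
        have "j - int j' = int (J - j')" using j' SJ unfolding j by simp
        then show ?thesis unfolding s by (simp add: binom_nat)
      qed
      have e5: "(-1)^(t+j') * binom (s - int t - 1 + int j') (int j') = (-1)^t * ((real t - real S) gchoose j')"
      proof -
        have "binom (s - int t - 1 + int j') (int j') = (real S - real t - 1 + real j') gchoose j'"
          unfolding binom_def s by simp
        also have "\<dots> = (-1)^j' * ((real j' - (real S - real t - 1 + real j') - 1) gchoose j')"
          by (rule gbinomial_negated_upper)
        also have "real j' - (real S - real t - 1 + real j') - 1 = real t - real S" by simp
        finally have "binom (s - int t - 1 + int j') (int j') = (-1)^j' * ((real t - real S) gchoose j')" .
        then have "(-1)^(t+j') * binom (s - int t - 1 + int j') (int j') = ((-1)^t * ((-1)^j' * (-1)^j')) * ((real t - real S) gchoose j')"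
          by (simp add: power_add mult_ac)
        also have "(-1::real)^j' * (-1)^j' = 1" by (simp flip: power_add)
        finally show ?thesis by simp
      qed
      show "(-1) ^ nat (int t + int j') / real_of_int (2 * s - int t)
              * binom i (int t) * binom (s - int t - 1 + int j') (int j') * binom s (j - int j')
          = (-1)^t / real (2*S - t) * real (I choose t) * ((real t - real S) gchoose j') * real (S choose (J - j'))"
      proof -
        have "(-1) ^ nat (int t + int j') / real_of_int (2 * s - int t)
              * binom i (int t) * binom (s - int t - 1 + int j') (int j') * binom s (j - int j')
            = ((-1)^(t+j') * binom (s - int t - 1 + int j') (int j')) / real (2*S - t) * real (I choose t) * real (S choose (J - j'))"
          unfolding e1 e2 e3 e4 by (simp add: mult_ac)
        also have "\<dots> = (-1)^t / real (2*S - t) * real (I choose t) * ((real t - real S) gchoose j') * real (S choose (J - j'))"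
          unfolding e5 by (simp add: mult_ac)
        finally show ?thesis .
      qed
    qed
    finally have E: "(\<Sum>j' = 0..s. \<Sum>t = 0..i. (-1) ^ nat (t + j') / real_of_int (2 * s - t)
              * binom i t * binom (s - t - 1 + j') j' * binom s (j - j'))
        = (\<Sum>j'\<le>S. \<Sum>t\<le>I. (-1)^t / real (2*S - t) * real (I choose t) * ((real t - real S) gchoose j') * real (S choose (J - j')))" .
    have e6: "real_of_int (2 * s - i) = real (2*S - I)" using IS unfolding s i by simp
    have e7: "binom (2 * s) i = real ((2*S) choose I)"
    proof -
      have h: "2 * s = int (2*S)" unfolding s by simp
      show ?thesis unfolding h i by (rule binom_nat)
    qed
    show ?thesis unfolding E e6 e7 X_def by (rule sumB_nat[OF S1 IS SJ J2 IJ])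
  qed
  have C: "binom (2 * s) j = real ((2*S) choose J)"
  proof -
    have h: "2 * s = int (2*S)" unfolding s by simp
    show ?thesis unfolding h j by (rule binom_nat)
  qed
  have n1: "nat (s + i + j) = S + I + J" and n2: "nat (i + j + 1) = I + J + 1"
    unfolding s i j by simp_all
  have "(-1) ^ nat (s + i + j) * binom (2 * s) j *
           (\<Sum>i' = 0..s. (-1) ^ nat i' * binom (j - i' - 1) s * binom s (i - i'))
         + (-1) ^ nat (i + j + 1) * real_of_int (2 * s - i) * binom (2 * s) i *
           (\<Sum>j' = 0..s. \<Sum>t = 0..i. (-1) ^ nat (t + j') / real_of_int (2 * s - t)
              * binom i t * binom (s - t - 1 + j') j' * binom s (j - j'))
       = (-1)^(S+I+J) * real ((2*S) choose J) * X + (-1)^(I+J+1) * ((-1)^S * real ((2*S) choose J) * X)"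
    unfolding A n1 n2 C B[symmetric] by (simp add: mult_ac)
  also have "\<dots> = 0" by (simp add: power_add)
  finally show ?thesis .
qed

end
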